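(* Let $D_1$ be an $m\times m$ Euclidean distance matrix (EDM) of embedding dimension $r_1$, and let $D_2$ be an $n\times n$ EDM of embedding dimension $r_2$. Then the $mn\times mn$ matrix $D = E_m\otimes D_2 + D_1\otimes E_n$ is an EDM of embedding dimension $r_1+r_2$, where $E_k$ denotes the $k\times k$ matrix of all ones and $\otimes$ denotes the Kronecker product.
   Context: An $N\times N$ matrix $D=(d_{ij})$ is a Euclidean distance matrix (EDM) if there exist points $p^1,\dots,p^N$ in some Euclidean space $\mathbb{R}^s$ with $d_{ij}=\|p^i-p^j\|^2$ for all $i,j$ (Euclidean norm); the dimension of the affine span of these points is called the embedding dimension of $D$. *)

theory Defs
  imports Complex_Main "HOL-Library.Function_Algebras"
begin

text \<open>Square matrices of size N are represented as functions nat => nat => real,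
  only the entries with indices below N are meaningful.
  Points of the Euclidean space R^s are represented as functions nat => real
  vanishing at all coordinates >= s; these form a real vector space under the
  pointwise operations.\<close>

definition fscale :: "real \<Rightarrow> (nat \<Rightarrow> real) \<Rightarrow> (nat \<Rightarrow> real)" where
  "fscale c f = (\<lambda>t. c * f t)"

definition affine_span_dim :: "nat \<Rightarrow> (nat \<Rightarrow> nat \<Rightarrow> real) \<Rightarrow> nat" where
  "affine_span_dim N p = vector_space.dim fscale {p i - p 0 | i. i < N}"

definition is_EDM :: "nat \<Rightarrow> (nat \<Rightarrow> nat \<Rightarrow> real) \<Rightarrow> nat \<Rightarrow> bool" where
  "is_EDM N D r \<longleftrightarrow>
     (\<exists>(s::nat) (p::nat \<Rightarrow> nat \<Rightarrow> real).
        (\<forall>i<N. \<forall>t\<ge>s. p i t = 0) \<and>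
        (\<forall>i<N. \<forall>j<N. D i j = (\<Sum>t<s. (p i t - p j t)^2)) \<and>
        affine_span_dim N p = r)"

definition ones_mat :: "nat \<Rightarrow> nat \<Rightarrow> real" where
  "ones_mat i j = 1"

text \<open>Kronecker product A (x) B where B is n x n: the entry in row i*n+k and
  column j*n+l (k,l < n) is A i j * B k l.\<close>
definition kron :: "nat \<Rightarrow> (nat \<Rightarrow> nat \<Rightarrow> real) \<Rightarrow> (nat \<Rightarrow> nat \<Rightarrow> real) \<Rightarrow> nat \<Rightarrow> nat \<Rightarrow> real" where
  "kron n A B a b = A (a div n) (b div n) * B (a mod n) (b mod n)"

end

theory Submission
  imports Defs
begin

lemma vs_fscale: "vector_space fscale"
  by unfold_locales (auto simp: fscale_def fun_eq_iff algebra_simps)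

interpretation V: vector_space fscale by (rule vs_fscale)

definition shiftR :: "nat \<Rightarrow> (nat \<Rightarrow> real) \<Rightarrow> (nat \<Rightarrow> real)" where
  "shiftR s v = (\<lambda>t. if t < s then 0 else v (t - s))"

lemma linear_shiftR: "module_hom fscale fscale (shiftR s)"
  apply (rule module_hom.intro)
    apply (rule V.module_axioms)
   apply (rule V.module_axioms)
  apply (rule module_hom_axioms.intro)
   apply (auto simp: shiftR_def fscale_def fun_eq_iff)
  done

lemma inj_shiftR: "inj (shiftR s)"
proof (rule injI)
  fix x y assume "shiftR s x = shiftR s y"
  then have "\<And>t. shiftR s x (t + s) = shiftR s y (t + s)" by simp
  then show "x = y" by (auto simp: shiftR_def fun_eq_iff)
qed

lemma sum_fun_apply: "(sum f A :: nat \<Rightarrow> real) x = (\<Sum>a\<in>A. f a x)"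
  by (induction A rule: infinite_finite_induct) auto

lemma dim_sum_shift:
  fixes S1 S2 :: "(nat \<Rightarrow> real) set"
  assumes f1: "finite S1" and f2: "finite S2"
    and van: "\<And>u t. u \<in> S1 \<Longrightarrow> t \<ge> s \<Longrightarrow> u t = 0"
    and z1: "0 \<in> S1" and z2: "0 \<in> S2"
  shows "V.dim {u + shiftR s w | u w. u \<in> S1 \<and> w \<in> S2} = V.dim S1 + V.dim S2"
proof -
  let ?R = "shiftR s"
  let ?S = "{u + shiftR s w | u w. u \<in> S1 \<and> w \<in> S2}"
  obtain B1 where B1: "B1 \<subseteq> S1" "V.independent B1" "S1 \<subseteq> V.span B1" "card B1 = V.dim S1"
    using V.basis_exists by blast
  obtain B2 where B2: "B2 \<subseteq> S2" "V.independent B2" "S2 \<subseteq> V.span B2" "card B2 = V.dim S2"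
    using V.basis_exists by blast
  have fB1: "finite B1" using B1(1) f1 finite_subset by blast
  have fB2: "finite B2" using B2(1) f2 finite_subset by blast
  define T where "T = B1 \<union> ?R ` B2"
  have linR: "module_hom fscale fscale ?R" by (rule linear_shiftR)
  have R0: "?R 0 = 0" by (simp add: shiftR_def fun_eq_iff)
  have vanB1: "\<And>u t. u \<in> B1 \<Longrightarrow> t \<ge> s \<Longrightarrow> u t = 0" using van B1(1) by blast
  have vanR: "\<And>w t. t < s \<Longrightarrow> ?R w t = 0" by (simp add: shiftR_def)
  have disj: "B1 \<inter> ?R ` B2 = {}"
  proof (rule ccontr)
    assume "B1 \<inter> ?R ` B2 \<noteq> {}"
    then obtain x where x: "x \<in> B1" "x \<in> ?R ` B2" by blast
    have "x = 0"
    proof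
      fix t show "x t = 0 t"
        using vanB1[OF x(1), of t] x(2) vanR[of t] by (cases "t < s") auto
    qed
    with x(1) B1(2) V.dependent_zero show False by blast
  qed
  have cardT: "card T = card B1 + card B2"
    unfolding T_def using disj fB1 fB2
    by (simp add: card_Un_disjoint card_image inj_on_subset[OF inj_shiftR])
  have spanS: "V.span ?S = V.span T"
    unfolding V.span_eq
  proof
    show "?S \<subseteq> V.span T"
    proof
      fix x assume "x \<in> ?S"
      then obtain u w where x: "x = u + ?R w" "u \<in> S1" "w \<in> S2" by blast
      have "u \<in> V.span T" using x(2) B1(3) V.span_mono[of B1 T] unfolding T_def by blast
      moreover have "?R w \<in> V.span T"
      proof -
        have "?R w \<in> ?R ` V.span B2" using x(3) B2(3) by blast
        also have "\<dots> = V.span (?R ` B2)" using module_hom.span_image[OF linR] by simp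
        also have "\<dots> \<subseteq> V.span T" unfolding T_def by (rule V.span_mono) blast
        finally show ?thesis .
      qed
      ultimately show "x \<in> V.span T" using x(1) V.span_add by simp
    qed
    show "T \<subseteq> V.span ?S"
    proof -
      have "B1 \<subseteq> ?S"
      proof
        fix u assume "u \<in> B1"
        then have "u = u + ?R 0" "u \<in> S1" using R0 B1(1) by auto
        then show "u \<in> ?S" using z2 by blast
      qed
      moreover have "?R ` B2 \<subseteq> ?S"
      proof
        fix x assume "x \<in> ?R ` B2"
        then obtain w where "x = 0 + ?R w" "w \<in> S2" using B2(1) by auto
        then show "x \<in> ?S" using z1 by blast
      qed
      ultimately show ?thesis unfolding T_def using V.span_superset by blast
    qed
  qed
  have indT: "V.independent T"
    unfolding V.independent_explicit_module
  proof (intro allI impI)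
    fix t u v
    assume ft: "finite t" and tT: "t \<subseteq> T" and sum0: "(\<Sum>v\<in>t. fscale (u v) v) = 0" and vt: "v \<in> t"
    have pt: "\<And>x. (\<Sum>v\<in>t. u v * v x) = 0"
    proof -
      fix x
      have "(\<Sum>v\<in>t. fscale (u v) v) x = 0" using sum0 by simp
      then show "(\<Sum>v\<in>t. u v * v x) = 0" by (simp add: sum_fun_apply fscale_def)
    qed
    define t1 where "t1 = t \<inter> B1"
    define t2 where "t2 = {w \<in> B2. ?R w \<in> t}"
    have tsplit: "t = t1 \<union> ?R ` t2" using tT unfolding t1_def t2_def T_def by auto
    have d12: "t1 \<inter> ?R ` t2 = {}" using disj unfolding t1_def t2_def by auto
    have ft1: "finite t1" using ft t1_def by simp
    have ft2: "finite t2" using fB2 t2_def by simp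
    have injt2: "inj_on ?R t2" using inj_shiftR by (rule inj_on_subset) simp
    have psplit: "\<And>x. (\<Sum>v\<in>t1. u v * v x) + (\<Sum>w\<in>t2. u (?R w) * ?R w x) = 0"
    proof -
      fix x
      have "(\<Sum>v\<in>t. u v * v x) = (\<Sum>v\<in>t1. u v * v x) + (\<Sum>v\<in>?R ` t2. u v * v x)"
        by (subst tsplit, rule sum.union_disjoint) (use ft1 ft2 d12 in auto)
      also have "(\<Sum>v\<in>?R ` t2. u v * v x) = (\<Sum>w\<in>t2. u (?R w) * ?R w x)"
        by (rule sum.reindex[OF injt2, unfolded comp_def])
      finally show "(\<Sum>v\<in>t1. u v * v x) + (\<Sum>w\<in>t2. u (?R w) * ?R w x) = 0" using pt by simp
    qed
    have c1: "u v = 0" if "v \<in> t1" for v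
    proof -
      have "(\<Sum>v\<in>t1. fscale (u v) v) = 0"
      proof
        fix x
        show "(\<Sum>v\<in>t1. fscale (u v) v) x = 0 x"
        proof (cases "x < s")
          case True
          have "(\<Sum>w\<in>t2. u (?R w) * ?R w x) = 0" using vanR[OF True] by simp
          then show ?thesis using psplit[of x] by (simp add: sum_fun_apply fscale_def)
        next
          case False
          have "\<And>v. v \<in> t1 \<Longrightarrow> v x = 0" using vanB1 False unfolding t1_def by auto
          then show ?thesis by (simp add: sum_fun_apply fscale_def sum.neutral)
        qed
      qed
      then show ?thesis using V.independentD[OF B1(2) ft1 _ _ that] unfolding t1_def by auto
    qed
    have c2: "u (?R w) = 0" if "w \<in> t2" for w
    proof -
      have "(\<Sum>w\<in>t2. fscale (u (?R w)) w) = 0"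
      proof
        fix y
        have "(\<Sum>v\<in>t1. u v * v (y + s)) = 0"
          using vanB1 unfolding t1_def by (intro sum.neutral) auto
        moreover have "\<And>w. ?R w (y + s) = w y" by (simp add: shiftR_def)
        ultimately show "(\<Sum>w\<in>t2. fscale (u (?R w)) w) y = 0 y"
          using psplit[of "y + s"] by (simp add: sum_fun_apply fscale_def)
      qed
      then show ?thesis
        using V.independentD[OF B2(2) ft2 _ _ that, of "\<lambda>w. u (?R w)"] unfolding t2_def by auto
    qed
    show "u v = 0" using vt c1 c2 tsplit by auto
  qed
  have "V.dim ?S = card T" using V.dim_eq_card[OF spanS[symmetric] indT] .
  then show ?thesis using cardT B1(4) B2(4) by simp
qed

lemma sum_lessThan_add: "sum (f::nat \<Rightarrow> real) {..<a+b} = sum f {..<a} + (\<Sum>t<b. f (t + a))"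
  by (induction b) (auto simp: add.commute add.left_commute)

theorem theorem4:
  fixes m n r1 r2 :: nat and D1 D2 :: "nat \<Rightarrow> nat \<Rightarrow> real"
  assumes "0 < m" and "0 < n"
    and "is_EDM m D1 r1" and "is_EDM n D2 r2"
  shows "is_EDM (m * n) (\<lambda>a b. kron n ones_mat D2 a b + kron n D1 ones_mat a b) (r1 + r2)"
proof -
  obtain s1 p1 where p1: "\<forall>i<m. \<forall>t\<ge>s1. p1 i t = 0"
    "\<forall>i<m. \<forall>j<m. D1 i j = (\<Sum>t<s1. (p1 i t - p1 j t)^2)" "affine_span_dim m p1 = r1"
    using assms(3) unfolding is_EDM_def by blast
  obtain s2 p2 where p2: "\<forall>i<n. \<forall>t\<ge>s2. p2 i t = 0"
    "\<forall>i<n. \<forall>j<n. D2 i j = (\<Sum>t<s2. (p2 i t - p2 j t)^2)" "affine_span_dim n p2 = r2"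
    using assms(4) unfolding is_EDM_def by blast
  let ?R = "shiftR s1"
  define q where "q a = p1 (a div n) + ?R (p2 (a mod n))" for a
  have dm: "a div n < m" "a mod n < n" if "a < m * n" for a
    using that assms(2) by (auto simp: less_mult_imp_div_less mult.commute)
  have qt: "q a t = (if t < s1 then p1 (a div n) t else p2 (a mod n) (t - s1))" if "a < m * n" for a t
    using p1(1) dm[OF that] by (auto simp: q_def shiftR_def)
  have van: "\<forall>a<m*n. \<forall>t\<ge>s1+s2. q a t = 0"
    using qt p2(1) dm by auto
  have dist: "\<forall>a<m*n. \<forall>b<m*n. kron n ones_mat D2 a b + kron n D1 ones_mat a b
      = (\<Sum>t<s1+s2. (q a t - q b t)^2)"
  proof (intro allI impI)
    fix a b assume a: "a < m * n" and b: "b < m * n"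
    have "(\<Sum>t<s1+s2. (q a t - q b t)^2)
        = (\<Sum>t<s1. (q a t - q b t)^2) + (\<Sum>t<s2. (q a (t+s1) - q b (t+s1))^2)"
      by (rule sum_lessThan_add)
    also have "(\<Sum>t<s1. (q a t - q b t)^2) = (\<Sum>t<s1. (p1 (a div n) t - p1 (b div n) t)^2)"
      using qt[OF a] qt[OF b] by (intro sum.cong) auto
    also have "(\<Sum>t<s2. (q a (t+s1) - q b (t+s1))^2) = (\<Sum>t<s2. (p2 (a mod n) t - p2 (b mod n) t)^2)"
      using qt[OF a] qt[OF b] by (intro sum.cong) auto
    finally show "kron n ones_mat D2 a b + kron n D1 ones_mat a b
      = (\<Sum>t<s1+s2. (q a t - q b t)^2)"
      using p1(2) p2(2) dm[OF a] dm[OF b] by (simp add: kron_def ones_mat_def)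
  qed
  define S1 where "S1 = {p1 i - p1 0 | i. i < m}"
  define S2 where "S2 = {p2 i - p2 0 | i. i < n}"
  have Rdiff: "?R x - ?R y = ?R (x - y)" for x y by (auto simp: shiftR_def fun_eq_iff)
  have Seq: "{q a - q 0 | a. a < m * n} = {u + ?R w | u w. u \<in> S1 \<and> w \<in> S2}"
  proof (intro set_eqI iffI)
    fix x assume "x \<in> {q a - q 0 | a. a < m * n}"
    then obtain a where x: "x = q a - q 0" "a < m * n" by blast
    have "x = (p1 (a div n) - p1 0) + ?R (p2 (a mod n) - p2 0)"
      using x(1) by (auto simp: q_def shiftR_def fun_eq_iff)
    then show "x \<in> {u + ?R w | u w. u \<in> S1 \<and> w \<in> S2}"
      unfolding S1_def S2_def using dm[OF x(2)] by blast
  next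
    fix x assume "x \<in> {u + ?R w | u w. u \<in> S1 \<and> w \<in> S2}"
    then obtain i k where x: "x = (p1 i - p1 0) + ?R (p2 k - p2 0)" "i < m" "k < n"
      unfolding S1_def S2_def by blast
    define a where "a = i * n + k"
    have a: "a div n = i" "a mod n = k" using x(3) by (auto simp: a_def)
    have "a < m * n"
    proof -
      have "a < i * n + n" using x(3) a_def by simp
      also have "\<dots> = (i + 1) * n" by simp
      also have "\<dots> \<le> m * n" using x(2) by (intro mult_right_mono) auto
      finally show ?thesis .
    qed
    moreover have "x = q a - q 0"
      using x(1) a by (auto simp: q_def shiftR_def fun_eq_iff)
    ultimately show "x \<in> {q a - q 0 | a. a < m * n}" by blast
  qed
  have "affine_span_dim (m*n) q = V.dim S1 + V.dim S2"
    unfolding affine_span_dim_def Seq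
  proof (rule dim_sum_shift)
    show "finite S1" unfolding S1_def by simp
    show "finite S2" unfolding S2_def by simp
    show "\<And>u t. u \<in> S1 \<Longrightarrow> s1 \<le> t \<Longrightarrow> u t = 0"
      unfolding S1_def using p1(1) assms(1) by auto
    show "0 \<in> S1" unfolding S1_def using assms(1) by auto
    show "0 \<in> S2" unfolding S2_def using assms(2) by auto
  qed
  also have "\<dots> = r1 + r2"
    using p1(3) p2(3) unfolding affine_span_dim_def S1_def S2_def by simp
  finally show ?thesis unfolding is_EDM_def using van dist by blast
qed

end
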